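(* Consider the following binary classification model of feature learning. Let $p_d\in[0,1]$, $p_r = 1-p_d$, and let $t_d, t_r, n_d, n_r, c_d, c_r$ be nonnegative integers with $n_d \le t_d$, $n_r\le t_r$, $c_d\le t_d$, $c_r\le t_r$. Each class $y\in\{1,2\}$ has its own set $D_y$ of $t_d$ dominant features and its own set $R_y$ of $t_r$ rare features, all these sets being pairwise disjoint. A data point $(x,y)$ is generated as follows: $y$ is uniform on $\{1,2\}$; then with probability $p_d$ the point is dominant, and its feature set $\Pi(x)$ is a uniformly random $n_d$-element subset of $D_y$ (sampled without replacement); otherwise (probability $p_r$) it is rare, and $\Pi(x)$ is a uniformly random $n_r$-element subset of $R_y$. A model $f$ is drawn, independently of the data, by choosing for each class $y$ a uniformly random $c_d$-element subset of $D_y$ and a uniformly random $c_r$-element subset of $R_y$ (all choices independent); $\Pi(f)$ is the union of these subsets. On $(x,y)$, $f$ predicts $y$ if $\Pi(f)\cap\Pi(x)\neq\varnothing$, and otherwise outputs a uniformly random guess in $\{1,2\}$, so its expected error on $(x,y)$ is $\frac12\mathbf{1}\{\Pi(f)\cap\Pi(x)=\varnothing\}$. Then, with the convention $\binom{n}{r}=0$ when $n<r$, the expected accuracy over the model distribution and the data distribution is $$\mathsf{Acc} = p_d\left(1-\frac12\frac{\binom{t_d-c_d}{n_d}}{\binom{t_d}{n_d}}\right) + p_r\left(1-\frac12\frac{\binom{t_r-c_r}{n_r}}{\binom{t_r}{n_r}}\right).$$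
   Context: In the paper, $c$ denotes the total model capacity, with $c_d=\frac12 p_d c$ and $c_r = \frac12 p_r c$, both rounded to integers so that the total number of features of a model is $c$. These serve only to define $c_d,c_r$; the statement holds for any such integers. *)

theory Defs
  imports "HOL-Probability.Probability"
begin

definition ksubsets :: "'a set \<Rightarrow> nat \<Rightarrow> 'a set set" where
  "ksubsets A k = {S. S \<subseteq> A \<and> card S = k}"

text \<open>Data distribution: pairs (feature set \<Pi>(x), label y). Class labels are 1 and 2;
  D y / R y are the dominant / rare feature sets of class y.\<close>
definition data_pmf :: "real \<Rightarrow> nat \<Rightarrow> nat \<Rightarrow> (nat \<Rightarrow> 'a set) \<Rightarrow> (nat \<Rightarrow> 'a set)
    \<Rightarrow> ('a set \<times> nat) pmf" where
  "data_pmf p_d n_d n_r D R =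
     bind_pmf (pmf_of_set {1, 2}) (\<lambda>y.
     bind_pmf (bernoulli_pmf p_d) (\<lambda>dom.
     bind_pmf (if dom then pmf_of_set (ksubsets (D y) n_d) else pmf_of_set (ksubsets (R y) n_r))
       (\<lambda>S. return_pmf (S, y))))"

definition model_pmf :: "nat \<Rightarrow> nat \<Rightarrow> (nat \<Rightarrow> 'a set) \<Rightarrow> (nat \<Rightarrow> 'a set) \<Rightarrow> 'a set pmf" where
  "model_pmf c_d c_r D R =
     bind_pmf (pmf_of_set (ksubsets (D 1) c_d)) (\<lambda>A1.
     bind_pmf (pmf_of_set (ksubsets (R 1) c_r)) (\<lambda>B1.
     bind_pmf (pmf_of_set (ksubsets (D 2) c_d)) (\<lambda>A2.
     bind_pmf (pmf_of_set (ksubsets (R 2) c_r)) (\<lambda>B2.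
       return_pmf (A1 \<union> B1 \<union> A2 \<union> B2)))))"

definition err :: "'a set \<Rightarrow> 'a set \<Rightarrow> real" where
  "err F S = (if F \<inter> S = {} then 1/2 else 0)"

definition Acc :: "real \<Rightarrow> nat \<Rightarrow> nat \<Rightarrow> nat \<Rightarrow> nat \<Rightarrow> (nat \<Rightarrow> 'a set) \<Rightarrow> (nat \<Rightarrow> 'a set) \<Rightarrow> real" where
  "Acc p_d n_d n_r c_d c_r D R =
     measure_pmf.expectation (pair_pmf (model_pmf c_d c_r D R) (data_pmf p_d n_d n_r D R))
       (\<lambda>(F, (S, y)). 1 - err F S)"

end

theory Submission imports Defs begin
lemma exp_bind_bounded:
  fixes f :: "'b \<Rightarrow> real"
  assumes "\<And>x. \<bar>f x\<bar> \<le> B"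
  shows "measure_pmf.expectation (bind_pmf M N) f = measure_pmf.expectation M (\<lambda>x. measure_pmf.expectation (N x) f)"
  unfolding measure_pmf_bind
  apply (rule integral_bind[where K="count_space UNIV" and B=B and B'=1])
  using assms by (auto simp: measure_pmf.emeasure_space_1 measure_pmf_in_subprob_space)

lemma ksubsets_finite: "finite T \<Longrightarrow> finite (ksubsets T k)"
  unfolding ksubsets_def by (rule rev_finite_subset[of "Pow T"]) auto

lemma ksubsets_ne: "finite T \<Longrightarrow> k \<le> card T \<Longrightarrow> ksubsets T k \<noteq> {}"
  unfolding ksubsets_def using obtain_subset_with_card_n by blast

lemma ksubsets_card: "finite T \<Longrightarrow> card (ksubsets T k) = card T choose k"
  unfolding ksubsets_def by (rule n_subsets)

lemma count_disj:
  assumes "finite T" "card T = t" "card (F \<inter> T) = c"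
  shows "card {S \<in> ksubsets T n. F \<inter> S = {}} = (t - c) choose n"
proof -
  have "{S \<in> ksubsets T n. F \<inter> S = {}} = ksubsets (T - F) n"
    unfolding ksubsets_def by auto
  moreover have "card (T - F) = t - c"
    using assms by (metis card_Diff_subset_Int finite_Int inf_commute)
  ultimately show ?thesis using assms ksubsets_card[of "T - F" n] by simp
qed

lemma inner:
  assumes "finite T" "card T = t" "card (F \<inter> T) = c" "n \<le> t"
  shows "measure_pmf.expectation (pmf_of_set (ksubsets T n)) (\<lambda>S. 1 - err F S)
     = 1 - 1/2 * (real ((t - c) choose n) / real (t choose n))"
proof -
  let ?K = "ksubsets T n"
  have fin: "finite ?K" and ne: "?K \<noteq> {}" using assms ksubsets_finite ksubsets_ne by auto
  have ck: "card ?K = t choose n" using assms ksubsets_card by blast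
  have pos: "(t choose n) > 0" using assms by simp
  have "sum (\<lambda>S. 1 - err F S) ?K = real (card ?K) - sum (err F) ?K"
    by (simp add: sum_subtractf)
  also have "sum (err F) ?K = sum (\<lambda>_. 1/2) {S \<in> ?K. F \<inter> S = {}}"
    unfolding err_def by (simp add: sum.If_cases fin Int_def conj_commute)
  also have "\<dots> = 1/2 * real ((t - c) choose n)"
    using count_disj[OF assms(1-3)] by simp
  finally have "sum (\<lambda>S. 1 - err F S) ?K = real (t choose n) - 1/2 * real ((t - c) choose n)"
    using ck by simp
  thus ?thesis using fin ne pos ck
    by (simp add: integral_pmf_of_set field_simps)
qed


lemma data_exp:
  assumes "0 \<le> p_d" "p_d \<le> 1"
    and "n_d \<le> t_d" "n_r \<le> t_r"
    and "\<forall>y\<in>{1,2}. finite (D y) \<and> card (D y) = t_d \<and> finite (R y) \<and> card (R y) = t_r"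
    and "\<forall>y\<in>{1,2::nat}. card (F \<inter> D y) = c_d \<and> card (F \<inter> R y) = c_r"
  shows "measure_pmf.expectation (data_pmf p_d n_d n_r D R) (\<lambda>(S, y). 1 - err F S) =
      p_d * (1 - 1/2 * (real ((t_d - c_d) choose n_d) / real (t_d choose n_d)))
    + (1 - p_d) * (1 - 1/2 * (real ((t_r - c_r) choose n_r) / real (t_r choose n_r)))"
proof -
  have bd: "\<And>x. \<bar>(\<lambda>(S, y). 1 - err F S) x\<bar> \<le> (1::real)"
    by (auto simp: err_def)
  have step: "\<And>y. y \<in> {1,2} \<Longrightarrow> measure_pmf.expectation
       (bind_pmf (bernoulli_pmf p_d) (\<lambda>dom.
     bind_pmf (if dom then pmf_of_set (ksubsets (D y) n_d) else pmf_of_set (ksubsets (R y) n_r))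
       (\<lambda>S. return_pmf (S, y)))) (\<lambda>(S, y). 1 - err F S) =
      p_d * (1 - 1/2 * (real ((t_d - c_d) choose n_d) / real (t_d choose n_d)))
    + (1 - p_d) * (1 - 1/2 * (real ((t_r - c_r) choose n_r) / real (t_r choose n_r)))"
  proof -
    fix y :: nat assume y: "y \<in> {1,2}"
    show "?thesis y"
      apply (subst exp_bind_bounded[OF bd])
      apply (subst integral_bernoulli_pmf[OF assms(1,2)])
      apply (simp only: if_True if_False)
      apply (subst exp_bind_bounded[OF bd])+
      apply (simp only: expectation_return_pmf case_prod_conv)
      apply (subst inner[where t=t_d and c=c_d])
      using assms y apply auto[4]
      apply (subst inner[where t=t_r and c=c_r])
      using assms y apply auto[4]
      by (simp add: mult.commute)
  qed
  show ?thesis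
    unfolding data_pmf_def
    apply (subst exp_bind_bounded[OF bd])
    apply (subst integral_pmf_of_set)
    using step by auto
qed

theorem mainTheorem1:
  fixes p_d :: real and t_d t_r n_d n_r c_d c_r :: nat
    and D R :: "nat \<Rightarrow> 'a set"
  assumes "0 \<le> p_d" "p_d \<le> 1"
    and "n_d \<le> t_d" "n_r \<le> t_r" "c_d \<le> t_d" "c_r \<le> t_r"
    and "\<forall>y\<in>{1,2}. finite (D y) \<and> card (D y) = t_d \<and> finite (R y) \<and> card (R y) = t_r"
    and "D 1 \<inter> D 2 = {}" "R 1 \<inter> R 2 = {}"
    and "\<forall>y\<in>{1,2}. \<forall>y'\<in>{1,2}. D y \<inter> R y' = {}"
  shows "Acc p_d n_d n_r c_d c_r D R =
      p_d * (1 - 1/2 * (real ((t_d - c_d) choose n_d) / real (t_d choose n_d)))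
    + (1 - p_d) * (1 - 1/2 * (real ((t_r - c_r) choose n_r) / real (t_r choose n_r)))"
    (is "_ = ?V")
proof -
  have bd: "\<And>x. \<bar>(\<lambda>(F, (S, y)). 1 - err F S) x\<bar> \<le> (1::real)"
    by (auto simp: err_def)
  have bd2: "\<And>F x. \<bar>(\<lambda>(S, y). 1 - err F S) x\<bar> \<le> (1::real)"
    by (auto simp: err_def)
  have fin: "\<And>y. y \<in> {1,2} \<Longrightarrow> finite (D y) \<and> finite (R y)" using assms(7) by auto
  have sets: "\<And>k T. finite T \<Longrightarrow> k \<le> card T \<Longrightarrow> set_pmf (pmf_of_set (ksubsets T k)) = ksubsets T k"
    using ksubsets_finite ksubsets_ne by (metis set_pmf_of_set)
  have cards: "\<forall>y\<in>{1,2::nat}. card (F \<inter> D y) = c_d \<and> card (F \<inter> R y) = c_r"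
    if F: "F \<in> set_pmf (model_pmf c_d c_r D R)" for F
  proof -
    from F obtain A1 B1 A2 B2 where
      A1: "A1 \<in> ksubsets (D 1) c_d" and B1: "B1 \<in> ksubsets (R 1) c_r" and
      A2: "A2 \<in> ksubsets (D 2) c_d" and B2: "B2 \<in> ksubsets (R 2) c_r" and
      FF: "F = A1 \<union> B1 \<union> A2 \<union> B2"
      unfolding model_pmf_def using assms(5,6,7)
      by (auto simp: sets)
    have "F \<inter> D 1 = A1" "F \<inter> D 2 = A2" "F \<inter> R 1 = B1" "F \<inter> R 2 = B2"
      using A1 A2 B1 B2 FF assms(8,9,10) unfolding ksubsets_def by blast+
    thus ?thesis using A1 A2 B1 B2 unfolding ksubsets_def by auto
  qed
  have "Acc p_d n_d n_r c_d c_r D R = measure_pmf.expectation (model_pmf c_d c_r D R)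
      (\<lambda>F. measure_pmf.expectation (data_pmf p_d n_d n_r D R) (\<lambda>(S, y). 1 - err F S))"
    unfolding Acc_def pair_pmf_def
    apply (subst exp_bind_bounded[OF bd])
    apply (subst exp_bind_bounded[OF bd])
    by simp
  also have "\<dots> = measure_pmf.expectation (model_pmf c_d c_r D R) (\<lambda>F. ?V)"
    apply (rule integral_cong_AE)
      apply simp apply simp
    apply (simp only: AE_measure_pmf_iff)
    apply (intro ballI data_exp[OF assms(1-4,7)])
    using cards by blast
  also have "\<dots> = ?V" by simp
  finally show ?thesis .
qed

end
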